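(* Let $G$ be a group, let $\mathbb{F}$ be a field, and let $(W,V,\mu)$ be a partial $G$-algebra over $\mathbb{F}$. Let $Y\subseteq W$ be a $G$-invariant subset. Then there exists a unique smallest $G$-submodule $W(Y)$ of $W$ such that \[ W(Y)=\langle Y\rangle+\mu\big(S^2(W(Y)\cap V)\big), \] where $\langle Y\rangle$ denotes the $\mathbb{F}$-linear span of $Y$.
   Context: A partial $G$-algebra is a triple $(W,V,\mu)$ where $W$ is an $\mathbb{F}G$-module, $V\subseteq W$ is a $G$-submodule, and $\mu\colon S^2(V)\to W$ is a $G$-equivariant linear map from the symmetric square of $V$ to $W$. For a subspace $U\subseteq V$, $S^2(U)$ is regarded as a subspace of $S^2(V)$, and $\mu(S^2(U))$ denotes its image under $\mu$. *)

theory Defs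
  imports Complex_Main "HOL-Algebra.Group"
begin

definition G_module ::
  "('g, 'm) monoid_scheme \<Rightarrow> ('f::field \<Rightarrow> 'w::ab_group_add \<Rightarrow> 'w) \<Rightarrow> ('g \<Rightarrow> 'w \<Rightarrow> 'w) \<Rightarrow> bool"
  where "G_module G scale act \<longleftrightarrow>
     group G \<and> vector_space scale \<and>
     (\<forall>g\<in>carrier G. Vector_Spaces.linear scale scale (act g)) \<and>
     (\<forall>w. act \<one>\<^bsub>G\<^esub> w = w) \<and>
     (\<forall>g\<in>carrier G. \<forall>h\<in>carrier G. \<forall>w. act (g \<otimes>\<^bsub>G\<^esub> h) w = act g (act h w))"

definition G_submodule ::
  "('g, 'm) monoid_scheme \<Rightarrow> ('f::field \<Rightarrow> 'w::ab_group_add \<Rightarrow> 'w) \<Rightarrow> ('g \<Rightarrow> 'w \<Rightarrow> 'w) \<Rightarrow> 'w set \<Rightarrow> bool"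
  where "G_submodule G scale act U \<longleftrightarrow>
     module.subspace scale U \<and> (\<forall>g\<in>carrier G. \<forall>u\<in>U. act g u \<in> U)"

text \<open>W is the whole type 'w (a G-module), V a G-submodule,
  and the G-equivariant linear map mu : S^2(V) -> W is represented, via the universal
  property of the symmetric square, by the symmetric bilinear G-equivariant map
  b : V x V -> W with b u v = mu(u v).\<close>
definition partial_G_algebra ::
  "('g, 'm) monoid_scheme \<Rightarrow> ('f::field \<Rightarrow> 'w::ab_group_add \<Rightarrow> 'w) \<Rightarrow> ('g \<Rightarrow> 'w \<Rightarrow> 'w)
   \<Rightarrow> 'w set \<Rightarrow> ('w \<Rightarrow> 'w \<Rightarrow> 'w) \<Rightarrow> bool"
  where "partial_G_algebra G scale act V b \<longleftrightarrow>
     G_module G scale act \<and> G_submodule G scale act V \<and>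
     (\<forall>x\<in>V. \<forall>y\<in>V. b x y = b y x) \<and>
     (\<forall>x\<in>V. \<forall>y\<in>V. \<forall>z\<in>V. b (x + y) z = b x z + b y z) \<and>
     (\<forall>c. \<forall>x\<in>V. \<forall>z\<in>V. b (scale c x) z = scale c (b x z)) \<and>
     (\<forall>g\<in>carrier G. \<forall>x\<in>V. \<forall>y\<in>V. b (act g x) (act g y) = act g (b x y))"

text \<open>mu(S^2(U)) for a subspace U of V: the span of all products b u u' with u, u' in U.\<close>
definition mu_S2 :: "('f::field \<Rightarrow> 'w::ab_group_add \<Rightarrow> 'w) \<Rightarrow> ('w \<Rightarrow> 'w \<Rightarrow> 'w) \<Rightarrow> 'w set \<Rightarrow> 'w set"
  where "mu_S2 scale b U = module.span scale {b u u' | u u'. u \<in> U \<and> u' \<in> U}"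

definition set_plus_sub :: "'w::ab_group_add set \<Rightarrow> 'w set \<Rightarrow> 'w set"
  where "set_plus_sub A B = {a + c | a c. a \<in> A \<and> c \<in> B}"

end

theory Submission
  imports Defs
begin

theorem lemma5p2:
  fixes G :: "('g, 'm) monoid_scheme"
    and scale :: "'f::field \<Rightarrow> 'w::ab_group_add \<Rightarrow> 'w"
    and act :: "'g \<Rightarrow> 'w \<Rightarrow> 'w"
    and V :: "'w set" and b :: "'w \<Rightarrow> 'w \<Rightarrow> 'w" and Y :: "'w set"
  assumes "partial_G_algebra G scale act V b"
    and "\<forall>g\<in>carrier G. \<forall>y\<in>Y. act g y \<in> Y"
  shows "\<exists>!M. G_submodule G scale act M \<and>
           M = set_plus_sub (module.span scale Y) (mu_S2 scale b (M \<inter> V)) \<and>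
           (\<forall>M'. G_submodule G scale act M' \<and>
                 M' = set_plus_sub (module.span scale Y) (mu_S2 scale b (M' \<inter> V)) \<longrightarrow> M \<subseteq> M')"
proof -
  have VS: "vector_space scale" and lin: "\<And>g. g \<in> carrier G \<Longrightarrow> Vector_Spaces.linear scale scale (act g)"
    and Vsub: "\<And>g v. g \<in> carrier G \<Longrightarrow> v \<in> V \<Longrightarrow> act g v \<in> V"
    and beq: "\<And>g x y. g \<in> carrier G \<Longrightarrow> x \<in> V \<Longrightarrow> y \<in> V \<Longrightarrow> b (act g x) (act g y) = act g (b x y)"
    using assms(1) unfolding partial_G_algebra_def G_module_def G_submodule_def by auto
  interpret vector_space scale by (rule VS)
  have hom: "\<And>g. g \<in> carrier G \<Longrightarrow> module_hom scale scale (act g)"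
    using lin by (simp add: linear_iff_module_hom)
  define F where "F = (\<lambda>M. set_plus_sub (span Y) (mu_S2 scale b (M \<inter> V)))"
  have mono: "mono F"
    unfolding F_def mono_def set_plus_sub_def mu_S2_def
  proof (intro allI impI subsetI)
    fix A B x assume AB: "(A::'w set) \<subseteq> B" and x: "x \<in> {a + c |a c. a \<in> span Y \<and> c \<in> span {b u u' |u u'. u \<in> A \<inter> V \<and> u' \<in> A \<inter> V}}"
    have "span {b u u' |u u'. u \<in> A \<inter> V \<and> u' \<in> A \<inter> V} \<subseteq> span {b u u' |u u'. u \<in> B \<inter> V \<and> u' \<in> B \<inter> V}"
      by (rule span_mono) (use AB in blast)
    with x show "x \<in> {a + c |a c. a \<in> span Y \<and> c \<in> span {b u u' |u u'. u \<in> B \<inter> V \<and> u' \<in> B \<inter> V}}"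
      by blast
  qed
  have subF: "subspace (F M)" for M
    unfolding F_def set_plus_sub_def mu_S2_def subspace_def
  proof (intro conjI ballI allI)
    show "0 \<in> {a + c |a c. a \<in> span Y \<and> c \<in> span {b u u' |u u'. u \<in> M \<inter> V \<and> u' \<in> M \<inter> V}}"
      by (rule CollectI, rule exI[of _ 0], rule exI[of _ 0]) (simp add: span_zero)
  next
    fix x y assume "x \<in> {a + c |a c. a \<in> span Y \<and> c \<in> span {b u u' |u u'. u \<in> M \<inter> V \<and> u' \<in> M \<inter> V}}"
      "y \<in> {a + c |a c. a \<in> span Y \<and> c \<in> span {b u u' |u u'. u \<in> M \<inter> V \<and> u' \<in> M \<inter> V}}"
    then obtain a1 c1 a2 c2 where "x = a1 + c1" "y = a2 + c2" "a1 \<in> span Y" "a2 \<in> span Y"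
      "c1 \<in> span {b u u' |u u'. u \<in> M \<inter> V \<and> u' \<in> M \<inter> V}" "c2 \<in> span {b u u' |u u'. u \<in> M \<inter> V \<and> u' \<in> M \<inter> V}"
      by blast
    then show "x + y \<in> {a + c |a c. a \<in> span Y \<and> c \<in> span {b u u' |u u'. u \<in> M \<inter> V \<and> u' \<in> M \<inter> V}}"
      by (intro CollectI exI[of _ "a1 + a2"] exI[of _ "c1 + c2"]) (auto simp: span_add algebra_simps)
  next
    fix c x assume "x \<in> {a + c |a c. a \<in> span Y \<and> c \<in> span {b u u' |u u'. u \<in> M \<inter> V \<and> u' \<in> M \<inter> V}}"
    then obtain a1 c1 where "x = a1 + c1" "a1 \<in> span Y"
      "c1 \<in> span {b u u' |u u'. u \<in> M \<inter> V \<and> u' \<in> M \<inter> V}" by blast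
    then show "scale c x \<in> {a + c |a c. a \<in> span Y \<and> c \<in> span {b u u' |u u'. u \<in> M \<inter> V \<and> u' \<in> M \<inter> V}}"
      by (intro CollectI exI[of _ "scale c a1"] exI[of _ "scale c c1"]) (auto simp: span_scale scale_right_distrib)
  qed
  define M0 where "M0 = lfp F"
  have fixp: "F M0 = M0" unfolding M0_def using lfp_unfold[OF mono] by simp
  have low: "\<And>M'. F M' = M' \<Longrightarrow> M0 \<subseteq> M'" unfolding M0_def by (rule lfp_lowerbound) simp
  define S where "S = {x\<in>M0. \<forall>g\<in>carrier G. act g x \<in> M0}"
  have "F S \<subseteq> S"
  proof
    fix x assume x: "x \<in> F S"
    have "S \<subseteq> M0" unfolding S_def by blast
    then have "F S \<subseteq> F M0" using mono by (simp add: mono_def)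
    with x fixp have xM: "x \<in> M0" by blast
    from x obtain a c where xac: "x = a + c" "a \<in> span Y"
      and c: "c \<in> span {b u u' |u u'. u \<in> S \<inter> V \<and> u' \<in> S \<inter> V}"
      unfolding F_def set_plus_sub_def mu_S2_def by blast
    have "act g x \<in> M0" if g: "g \<in> carrier G" for g
    proof -
      interpret h: module_hom scale scale "act g" by (rule hom[OF g])
      have "act g a \<in> act g ` span Y" using xac by blast
      also have "\<dots> = span (act g ` Y)" by (rule h.span_image[symmetric])
      also have "\<dots> \<subseteq> span Y" by (rule span_mono) (use assms(2) g in blast)
      finally have A: "act g a \<in> span Y" .
      have "act g c \<in> act g ` span {b u u' |u u'. u \<in> S \<inter> V \<and> u' \<in> S \<inter> V}" using c by blast
      also have "\<dots> = span (act g ` {b u u' |u u'. u \<in> S \<inter> V \<and> u' \<in> S \<inter> V})" by (rule h.span_image[symmetric])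
      also have "\<dots> \<subseteq> span {b u u' |u u'. u \<in> M0 \<inter> V \<and> u' \<in> M0 \<inter> V}"
      proof (rule span_mono, rule subsetI)
        fix z assume "z \<in> act g ` {b u u' |u u'. u \<in> S \<inter> V \<and> u' \<in> S \<inter> V}"
        then obtain u u' where "z = act g (b u u')" "u \<in> S" "u \<in> V" "u' \<in> S" "u' \<in> V" by blast
        then show "z \<in> {b u u' |u u'. u \<in> M0 \<inter> V \<and> u' \<in> M0 \<inter> V}"
          using beq[OF g] Vsub[OF g] g unfolding S_def
          by (intro CollectI exI[of _ "act g u"] exI[of _ "act g u'"]) auto
      qed
      finally have C: "act g c \<in> span {b u u' |u u'. u \<in> M0 \<inter> V \<and> u' \<in> M0 \<inter> V}" .
      have "act g x = act g a + act g c" using xac h.add by simp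
      then have "act g x \<in> F M0" using A C unfolding F_def set_plus_sub_def mu_S2_def by blast
      then show ?thesis using fixp by simp
    qed
    with xM show "x \<in> S" unfolding S_def by blast
  qed
  then have "M0 \<subseteq> S" unfolding M0_def by (rule lfp_lowerbound)
  then have stab: "\<forall>g\<in>carrier G. \<forall>u\<in>M0. act g u \<in> M0" unfolding S_def by blast
  have sub0: "G_submodule G scale act M0"
    unfolding G_submodule_def using stab subF[of M0] fixp by simp
  have P0: "M0 = set_plus_sub (span Y) (mu_S2 scale b (M0 \<inter> V))"
    using fixp unfolding F_def by simp
  show ?thesis
  proof (rule ex1I[of _ M0])
    show "G_submodule G scale act M0 \<and> M0 = set_plus_sub (span Y) (mu_S2 scale b (M0 \<inter> V)) \<and>
      (\<forall>M'. G_submodule G scale act M' \<and> M' = set_plus_sub (span Y) (mu_S2 scale b (M' \<inter> V)) \<longrightarrow> M0 \<subseteq> M')"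
      using sub0 P0 low unfolding F_def by auto
  next
    fix M assume M: "G_submodule G scale act M \<and> M = set_plus_sub (span Y) (mu_S2 scale b (M \<inter> V)) \<and>
      (\<forall>M'. G_submodule G scale act M' \<and> M' = set_plus_sub (span Y) (mu_S2 scale b (M' \<inter> V)) \<longrightarrow> M \<subseteq> M')"
    then have "M \<subseteq> M0" using sub0 P0 by blast
    moreover have "M0 \<subseteq> M" using M low unfolding F_def by auto
    ultimately show "M = M0" by blast
  qed
qed

end
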